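(* Let $p$ be a prime, $k\ge 1$, and let $M,H$ be invertible $k\times k$ matrices over $\mathbb{F}_p$. Let $m,n$ be positive integers and define \[A=\sum_{i=0}^{m-1} H^iMH^i,\qquad B=\sum_{i=0}^{n-1} H^iMH^i,\qquad K=\sum_{i=0}^{m+n-1} H^iMH^i.\] Suppose $R$ and $S$ are $k\times k$ matrices over $\mathbb{F}_p$ which commute with $H$ and satisfy \[RMS = HAH + M - A.\] Then $RBS + A = K$.
   Context: This arises from the MAKE key exchange protocol over the semidirect product of the additive semigroup and multiplicative semigroup of $k\times k$ matrices over $\mathbb{F}_p$, with product $(G_1,H_1)\cdot(G_2,H_2)=(H_2G_1H_2+G_2,H_1H_2)$. In it, $A$ and $B$ are the first components of $(M,H)^m$ and $(M,H)^n$ (Alice's and Bob's public keys), and $K$ is the shared secret key $H^mBH^m+A=H^nAH^n+B$. *)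

theory Defs
  imports "HOL-Analysis.Analysis"
begin

primrec matpow :: "'a::semiring_1 ^'n^'n \<Rightarrow> nat \<Rightarrow> 'a^'n^'n" where
  "matpow A 0 = mat 1"
| "matpow A (Suc j) = A ** matpow A j"

end

theory Submission
  imports Defs
begin

lemma mm_sum_left:
  fixes A :: "'a::comm_ring_1^'k^'k" and n :: nat and f :: "nat \<Rightarrow> 'a^'k^'k"
  shows "A ** (\<Sum>i<n. f i) = (\<Sum>i<n. A ** f i)"
  by (induction n) (simp_all add: matrix_add_ldistrib)

lemma mm_sum_right:
  fixes A :: "'a::comm_ring_1^'k^'k" and n :: nat and f :: "nat \<Rightarrow> 'a^'k^'k"
  shows "(\<Sum>i<n. f i) ** A = (\<Sum>i<n. f i ** A)"
proof (induction n)
  case 0 then show ?case by simp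
next
  case (Suc n)
  have "(X + Y) ** A = X ** A + Y ** A" for X Y :: "'a^'k^'k"
    by (simp add: matrix_matrix_mult_def vec_eq_iff sum.distrib[symmetric] algebra_simps)
  then show ?case using Suc by simp
qed

lemma matpow_comm:
  fixes X H :: "'a::comm_ring_1^'k^'k"
  assumes "X ** H = H ** X"
  shows "X ** matpow H i = matpow H i ** X"
proof (induction i)
  case 0 then show ?case by simp
next
  case (Suc i)
  have "X ** matpow H (Suc i) = (X ** H) ** matpow H i" by (simp add: matrix_mul_assoc)
  also have "\<dots> = H ** (X ** matpow H i)" by (simp add: assms matrix_mul_assoc)
  also have "\<dots> = matpow H (Suc i) ** X" by (simp add: Suc matrix_mul_assoc)
  finally show ?case .
qed

lemma matpow_add:
  fixes H :: "'a::comm_ring_1^'k^'k"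
  shows "matpow H i ** matpow H j = matpow H (i + j)"
  by (induction i) (simp_all add: matrix_mul_assoc[symmetric])

lemma matpow_Suc':
  fixes H :: "'a::comm_ring_1^'k^'k"
  shows "matpow H (Suc i) = matpow H i ** H"
  using matpow_comm[of H H i] by simp

theorem lemma3p1:
  fixes p :: nat
    and M H R S :: "'a::{field,finite} ^'k::finite^'k"
    and m n :: nat
  assumes "prime p" and "CARD('a) = p"
    and "invertible M" and "invertible H"
    and "m > 0" and "n > 0"
    and "R ** H = H ** R" and "S ** H = H ** S"
    and "R ** M ** S =
           H ** (\<Sum>i<m. matpow H i ** M ** matpow H i) ** H + M
           - (\<Sum>i<m. matpow H i ** M ** matpow H i)"
  shows "R ** (\<Sum>i<n. matpow H i ** M ** matpow H i) ** S
           + (\<Sum>i<m. matpow H i ** M ** matpow H i)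
         = (\<Sum>i<m+n. matpow H i ** M ** matpow H i)"
proof -
  define f where "f i = matpow H i ** M ** matpow H i" for i
  have tel: "H ** (\<Sum>i<m. f i) ** H = (\<Sum>i<m. f (Suc i))"
    unfolding mm_sum_left mm_sum_right
  proof (rule sum.cong[OF refl])
    fix i
    show "H ** f i ** H = f (Suc i)"
      unfolding f_def
      using matpow_comm[of H H i] by (simp add: matrix_mul_assoc)
  qed
  have "(\<Sum>i<m. f (Suc i)) + f 0 = (\<Sum>i<m. f i) + f m"
  proof -
    have "(\<Sum>i<Suc m. f i) = f 0 + (\<Sum>i<m. f (Suc i))" by (rule sum.lessThan_Suc_shift)
    moreover have "(\<Sum>i<Suc m. f i) = (\<Sum>i<m. f i) + f m" by simp
    ultimately show ?thesis by (simp add: add.commute)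
  qed
  then have RMS: "R ** M ** S = f m"
    using assms(9) tel unfolding f_def[symmetric]
    by (simp add: f_def algebra_simps)
  have "R ** (\<Sum>i<n. f i) ** S = (\<Sum>i<n. f (i + m))"
    unfolding mm_sum_left mm_sum_right
  proof (rule sum.cong[OF refl])
    fix i
    have "R ** f i ** S = matpow H i ** (R ** M ** S) ** matpow H i"
      unfolding f_def
      by (simp add: matrix_mul_assoc matpow_comm[OF assms(7)] matpow_comm[OF assms(8)])
         (simp add: matrix_mul_assoc[symmetric] matpow_comm[OF assms(8)])
    also have "\<dots> = f (i + m)"
      unfolding RMS f_def
      by (simp add: matrix_mul_assoc matpow_add)
         (simp add: matrix_mul_assoc[symmetric] matpow_add add.commute)
    finally show "R ** f i ** S = f (i + m)" .
  qed
  moreover have "(\<Sum>i<n. f (i + m)) + (\<Sum>i<m. f i) = (\<Sum>i<m+n. f i)"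
    by (induction n) (simp_all add: algebra_simps)
  ultimately show ?thesis unfolding f_def[symmetric] by simp
qed

end
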